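(* As an identity of meromorphic functions of $s\in\mathbb{C}$ (the series converging for every $s$ at which its terms are defined), $$\zeta(s)=\frac{1}{\Gamma(s)\,(2^s-1-s)}\sum_{k=1}^\infty\frac{2^{-2k}\,\zeta(s+2k)\,\Gamma(1+s+2k)}{\Gamma(2k+2)} .$$
   Context: $\zeta$ is the Riemann zeta function (meromorphically continued), $\Gamma$ the Gamma function. *)

theory Defs
  imports "HOL-Complex_Analysis.Complex_Analysis"
begin

text \<open>The Riemann zeta function, meromorphically continued: the (unique, by the
identity theorem) function holomorphic on the complex plane minus the point 1 that
agrees with the Dirichlet series sum of n to the power -s for Re s > 1.
Its value at the pole 1 is irrelevant and left unspecified.\<close>
definition riemann_zeta :: "complex \<Rightarrow> complex" where
  "riemann_zeta = (SOME f. f holomorphic_on (UNIV - {1}) \<and>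
      (\<forall>s. 1 < Re s \<longrightarrow> f s = (\<Sum>n. 1 / (of_nat (Suc n)) powr s)))"

end

theory Submission
  imports Defs
begin



lemma double_swap:
  fixes a :: "nat \<Rightarrow> nat \<Rightarrow> complex"
  assumes bnd: "\<And>m i. norm (a m i) \<le> u m * v i"
    and u: "summable u" and v: "summable v" and u0: "\<And>m. u m \<ge> 0" and v0: "\<And>i. v i \<ge> 0"
  shows "summable (\<lambda>m. \<Sum>i. a m i)" "summable (\<lambda>i. \<Sum>m. a m i)"
        "(\<Sum>m. \<Sum>i. a m i) = (\<Sum>i. \<Sum>m. a m i)"
proof -
  have sa: "summable (\<lambda>i. norm (a m i))" for m
    by (rule summable_comparison_test[OF _ summable_mult[OF v, of "u m"]]) (use bnd in auto)
  have sb: "summable (\<lambda>m. norm (a m i))" for i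
    by (rule summable_comparison_test[OF _ summable_mult2[OF u, of "v i"]]) (use bnd in auto)
  have na: "norm (\<Sum>i. a m i) \<le> u m * (\<Sum>i. v i)" for m
  proof -
    have "norm (\<Sum>i. a m i) \<le> (\<Sum>i. norm (a m i))" by (rule summable_norm[OF sa])
    also have "\<dots> \<le> (\<Sum>i. u m * v i)" by (rule suminf_le) (use bnd sa summable_mult[OF v] in auto)
    also have "\<dots> = u m * (\<Sum>i. v i)" by (rule suminf_mult[OF v])
    finally show ?thesis .
  qed
  have nb: "norm (\<Sum>m. a m i) \<le> (\<Sum>m. u m) * v i" for i
  proof -
    have "norm (\<Sum>m. a m i) \<le> (\<Sum>m. norm (a m i))" by (rule summable_norm[OF sb])
    also have "\<dots> \<le> (\<Sum>m. u m * v i)" by (rule suminf_le) (use bnd sb summable_mult2[OF u] in auto)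
    also have "\<dots> = (\<Sum>m. u m) * v i" by (rule suminf_mult2[OF u, symmetric])
    finally show ?thesis .
  qed
  show s1: "summable (\<lambda>m. \<Sum>i. a m i)"
    by (rule summable_norm_cancel, rule summable_comparison_test[OF _ summable_mult2[OF u]]) (use na in auto)
  show s2: "summable (\<lambda>i. \<Sum>m. a m i)"
    by (rule summable_norm_cancel, rule summable_comparison_test[OF _ summable_mult[OF v]]) (use nb in auto)
  have n1: "summable (\<lambda>m. norm (\<Sum>i. a m i))"
    by (rule summable_comparison_test[OF _ summable_mult2[OF u]]) (use na in auto)
  have n2: "summable (\<lambda>i. norm (\<Sum>m. a m i))"
    by (rule summable_comparison_test[OF _ summable_mult[OF v]]) (use nb in auto)
  have prod: "(\<lambda>(m,i). u m * v i) summable_on (UNIV \<times> UNIV)"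
  proof -
    have "(\<lambda>x. (\<lambda>(m,i). u m * v i) x) summable_on Sigma UNIV (\<lambda>_. UNIV)"
    proof (rule summable_on_SigmaI)
      show "((\<lambda>y. (\<lambda>(m, i). u m * v i) (x, y)) has_sum (u x * (\<Sum>i. v i))) UNIV" for x
        using sums_nonneg_imp_has_sum[OF sums_mult[OF summable_sums[OF v], of "u x"]] u0 v0 by simp
      show "(\<lambda>x. u x * (\<Sum>i. v i)) summable_on UNIV"
        by (rule norm_summable_imp_summable_on) (use summable_mult2[OF u] u0 suminf_nonneg[OF v] v0 in auto)
      show "\<And>x y. x \<in> UNIV \<Longrightarrow> y \<in> UNIV \<Longrightarrow> 0 \<le> (case (x, y) of (m, i) \<Rightarrow> u m * v i)"
        using u0 v0 by simp
    qed
    thus ?thesis by simp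
  qed
  have "(\<lambda>x. norm ((\<lambda>(m,i). a m i) x)) summable_on (UNIV \<times> UNIV)"
    by (rule summable_on_comparison_test[OF prod]) (use bnd in auto)
  hence sumab: "(\<lambda>(m,i). a m i) summable_on (UNIV \<times> UNIV)"
    using summable_on_iff_abs_summable_on_complex by blast
  have i1: "infsum (a m) UNIV = (\<Sum>i. a m i)" for m
    using norm_summable_imp_has_sum[OF sa summable_sums[OF summable_norm_cancel[OF sa]]]
    by (simp add: infsumI)
  have i2: "infsum (\<lambda>m. a m i) UNIV = (\<Sum>m. a m i)" for i
    using norm_summable_imp_has_sum[OF sb summable_sums[OF summable_norm_cancel[OF sb]]]
    by (simp add: infsumI)
  have i3: "infsum (\<lambda>m. \<Sum>i. a m i) UNIV = (\<Sum>m. \<Sum>i. a m i)"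
    using norm_summable_imp_has_sum[OF n1 summable_sums[OF s1]] by (simp add: infsumI)
  have i4: "infsum (\<lambda>i. \<Sum>m. a m i) UNIV = (\<Sum>i. \<Sum>m. a m i)"
    using norm_summable_imp_has_sum[OF n2 summable_sums[OF s2]] by (simp add: infsumI)
  have "infsum (\<lambda>m. infsum (\<lambda>i. a m i) UNIV) UNIV = infsum (\<lambda>i. infsum (\<lambda>m. a m i) UNIV) UNIV"
    by (rule infsum_swap_banach[OF sumab])
  thus "(\<Sum>m. \<Sum>i. a m i) = (\<Sum>i. \<Sum>m. a m i)"
    using i1 i2 i3 i4 by simp
qed



lemma poch_nonneg': "0 \<le> (r::real) \<Longrightarrow> 0 \<le> pochhammer r n"
  by (induction n) (auto simp: pochhammer_Suc)

lemma norm_poch_le: "norm (pochhammer (a::complex) n) \<le> pochhammer (norm a) n"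
proof (induction n)
  case (Suc n)
  have "norm (pochhammer a (Suc n)) = norm (pochhammer a n) * norm (a + of_nat n)"
    by (simp add: pochhammer_Suc norm_mult)
  also have "\<dots> \<le> pochhammer (norm a) n * (norm a + of_nat n)"
    using norm_triangle_ineq[of a "of_nat n"]
    by (intro mult_mono Suc.IH poch_nonneg') auto
  finally show ?case by (simp add: pochhammer_Suc)
qed simp

lemma poch_mono: "0 \<le> r \<Longrightarrow> r \<le> (t::real) \<Longrightarrow> pochhammer r n \<le> pochhammer t n"
proof (induction n)
  case (Suc n)
  have "pochhammer r n * (r + of_nat n) \<le> pochhammer t n * (t + of_nat n)"
    by (rule mult_mono) (use Suc poch_nonneg'[of t n] in auto)
  thus ?case by (simp add: pochhammer_Suc)
qed simp

lemma norm_gchoose_le: "norm ((a::complex) gchoose n) \<le> pochhammer (norm a) n / fact n"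
proof -
  have "norm (a gchoose n) = norm (pochhammer (-a) n) / fact n"
    by (simp add: gbinomial_pochhammer norm_mult norm_divide norm_power)
  also have "\<dots> \<le> pochhammer (norm a) n / fact n"
    using norm_poch_le[of "-a" n] by (simp add: divide_right_mono)
  finally show ?thesis .
qed

lemma poch_series_sums:
  assumes "0 \<le> x" "x < (1::real)"
  shows "(\<lambda>n. pochhammer r n / fact n * x^n) sums (1 - x) powr (-r)"
proof -
  have "(\<lambda>n. ((-r) gchoose n) * (-x)^n) sums (1 + (-x)) powr (-r)"
    by (rule gen_binomial_real) (use assms in auto)
  moreover have "((-r) gchoose n) * (-x)^n = pochhammer r n / fact n * x^n" for n
  proof -
    have "((-r) gchoose n) * (-x)^n = ((-1)^n * (-1)^n) * (pochhammer r n / fact n * x^n)"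
      by (simp add: gbinomial_pochhammer power_minus[of x n])
    also have "(-1::real)^n * (-1)^n = 1" by (simp flip: power_add)
    finally show ?thesis by simp
  qed
  ultimately show ?thesis by simp
qed

lemma poch_series_summable:
  assumes "0 \<le> x" "x < (1::real)"
  shows "summable (\<lambda>n. pochhammer r n / fact n * x^n)"
  using poch_series_sums[OF assms] by (rule sums_summable)



definition zD :: "complex \<Rightarrow> complex" where
  "zD s = (\<Sum>n. 1 / (of_nat (Suc n)) powr s)"

lemma norm_zterm: "norm (1 / (of_nat (Suc n) :: complex) powr s) = real (Suc n) powr (- Re s)"
proof -
  have "norm ((of_nat (Suc n) :: complex) powr s) = real (Suc n) powr Re s"
    by (subst norm_powr_real_powr) auto
  thus ?thesis by (simp add: norm_divide powr_minus_divide)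
qed

lemma summable_Suc_powr: "a < -1 \<Longrightarrow> summable (\<lambda>n. real (Suc n) powr a)"
  using summable_real_powr_iff[of a] summable_Suc_iff[of "\<lambda>n. real n powr a"] by simp

lemma zterm_holo: "(\<lambda>s. 1 / (of_nat (Suc n) :: complex) powr s) holomorphic_on A"
  by (intro holomorphic_intros) auto

lemma zD_holo: "zD holomorphic_on {s. 1 < Re s}"
proof -
  have op: "open {s::complex. 1 < Re s}" by (simp add: open_halfspace_Re_gt)
  show ?thesis unfolding zD_def
  proof (rule holomorphic_uniform_sequence[OF op, where f = "\<lambda>N s. \<Sum>n<N. 1 / (of_nat (Suc n)) powr s"])
    show "(\<lambda>s. \<Sum>n<N. 1 / (of_nat (Suc n)) powr s) holomorphic_on {s. 1 < Re s}" for N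
      by (intro holomorphic_intros) auto
    fix z :: complex assume z: "z \<in> {s. 1 < Re s}"
    define d where "d = (Re z - 1) / 2"
    have d: "0 < d" using z by (simp add: d_def)
    have rzd: "1 < Re z - d" using z by (simp add: d_def field_simps)
    have sub: "cball z d \<subseteq> {s. 1 < Re s}"
    proof
      fix s assume "s \<in> cball z d"
      hence "\<bar>Re z - Re s\<bar> \<le> d"
        using abs_Re_le_cmod[of "z - s"] by (simp add: dist_norm)
      hence "Re z - Re s \<le> d" by (simp add: abs_le_iff)
      thus "s \<in> {s. 1 < Re s}" using z unfolding d_def by auto
    qed
    have "uniform_limit (cball z d) (\<lambda>N s. \<Sum>n<N. 1 / (of_nat (Suc n)) powr s)
            (\<lambda>s. \<Sum>n. 1 / (of_nat (Suc n)) powr s) sequentially"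
    proof (rule Weierstrass_m_test)
      show "summable (\<lambda>n. real (Suc n) powr (- (Re z - d)))"
        by (rule summable_Suc_powr) (use rzd in linarith)
      fix n s assume "s \<in> cball z d"
      hence "\<bar>Re z - Re s\<bar> \<le> d"
        using abs_Re_le_cmod[of "z - s"] by (simp add: dist_norm)
      hence "- Re s \<le> - (Re z - d)" by simp
      thus "norm (1 / (of_nat (Suc n) :: complex) powr s) \<le> real (Suc n) powr (- (Re z - d))"
        unfolding norm_zterm by (intro powr_mono) auto
    qed
    thus "\<exists>d>0. cball z d \<subseteq> {s. 1 < Re s} \<and>
            uniform_limit (cball z d) (\<lambda>N s. \<Sum>n<N. 1 / (of_nat (Suc n)) powr s)
              (\<lambda>s. \<Sum>n. 1 / (of_nat (Suc n)) powr s) sequentially"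
      using d sub by blast
  qed
qed

definition Cz :: real where "Cz = 4 * (\<Sum>n. real (Suc n) powr (-2))"

lemma zD_bound:
  assumes "2 \<le> Re s"
  shows "norm (zD s - 1) \<le> Cz * 2 powr (- Re s)"
proof -
  define t where "t n = 1 / (of_nat (Suc n) :: complex) powr s" for n
  have sn: "summable (\<lambda>n. norm (t n))" unfolding t_def norm_zterm
    by (rule summable_Suc_powr) (use assms in simp)
  have t0: "t 0 = 1" by (simp add: t_def)
  have zt: "zD s = (\<Sum>n. t n)" by (simp add: zD_def t_def)
  have h: "(\<Sum>n. t (Suc n)) = (\<Sum>n. t n) - t 0"
    by (rule suminf_split_head[OF summable_norm_cancel[OF sn]])
  have zt1: "zD s - 1 = (\<Sum>n. t (Suc n))"
    unfolding h zt t0 ..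
  have sn1: "summable (\<lambda>n. norm (t (Suc n)))"
    by (rule summable_Suc_iff[THEN iffD2]) (rule sn)
  have b: "norm (t (Suc n)) \<le> 2 powr (- Re s) * (4 * real (Suc n) powr (-2))" for n
  proof -
    have "norm (t (Suc n)) = real (Suc (Suc n)) powr (- Re s)"
      unfolding t_def by (rule norm_zterm)
    also have "\<dots> = (2 * (real (Suc (Suc n)) / 2)) powr (- Re s)"
      proof -
        have "2 * (real (Suc (Suc n)) / 2) = real (Suc (Suc n))" by simp
        thus ?thesis by (simp only:)
      qed
    also have "\<dots> = 2 powr (- Re s) * (real (Suc (Suc n)) / 2) powr (- Re s)"
      by (intro powr_mult; simp)
    also have "(real (Suc (Suc n)) / 2) powr (- Re s) \<le> (real (Suc (Suc n)) / 2) powr (-2)"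
      by (rule powr_mono) (use assms in auto)
    also have "(real (Suc (Suc n)) / 2) powr (-2) = 4 * real (Suc (Suc n)) powr (-2)"
      by (simp add: powr_divide powr_minus_divide)
    also have "\<dots> \<le> 4 * real (Suc n) powr (-2)"
      by (simp add: powr_mono2')
    finally show ?thesis by (simp add: mult_left_mono)
  qed
  have sm: "summable (\<lambda>n. 2 powr (- Re s) * (4 * real (Suc n) powr (-2)))"
    by (intro summable_mult summable_Suc_powr) auto
  have "norm (zD s - 1) = norm (\<Sum>n. t (Suc n))" by (simp only: zt1)
  also have "\<dots> \<le> (\<Sum>n. norm (t (Suc n)))" by (rule summable_norm[OF sn1])
  also have "\<dots> \<le> (\<Sum>n. 2 powr (- Re s) * (4 * real (Suc n) powr (-2)))"
    by (rule suminf_le[OF b sn1 sm])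
  also have "\<dots> = 2 powr (- Re s) * (4 * (\<Sum>n. real (Suc n) powr (-2)))"
  proof -
    have s2: "summable (\<lambda>n. real (Suc n) powr (-2))" by (rule summable_Suc_powr) simp
    have s4: "summable (\<lambda>n. 4 * real (Suc n) powr (-2))" by (rule summable_mult[OF s2])
    show ?thesis using suminf_mult[OF s4, of "2 powr (-Re s)"] suminf_mult[OF s2, of 4] by simp
  qed
  finally show ?thesis by (simp add: Cz_def mult.commute)
qed





definition D0 :: "complex \<Rightarrow> complex" where "D0 s = (s - 1) * (zD s - 1)"

definition Phi :: "(complex \<Rightarrow> complex) \<Rightarrow> complex \<Rightarrow> complex" where
  "Phi g s = 2 powr (1 - s) -
     (\<Sum>i. ((1 - s) gchoose Suc i) / of_nat (Suc (Suc i)) * g (s + of_nat (Suc i)))"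

definition H :: "nat \<Rightarrow> complex set" where "H m = {s. 1 - real m < Re s}"

lemma Cz_nonneg: "0 \<le> Cz"
proof -
  have "summable (\<lambda>n. real (Suc n) powr (-2))" by (rule summable_Suc_powr) simp
  from suminf_nonneg[OF this] show ?thesis by (simp add: Cz_def)
qed

lemma D0_bound:
  assumes "2 \<le> Re w"
  shows "norm (D0 w) \<le> norm (w - 1) * (Cz * 2 powr (- Re w))"
  unfolding D0_def norm_mult by (intro mult_left_mono zD_bound assms) auto

lemma gch_holo: "(\<lambda>s. ((1 - s) gchoose n)) holomorphic_on A"
proof -
  have eq: "(\<lambda>s. (1 - s) gchoose n) = (\<lambda>s::complex. (-1)^n * pochhammer (s - 1) n / fact n)"
    by (simp add: gbinomial_pochhammer fun_eq_iff)
  show ?thesis unfolding eq by (intro holomorphic_intros) auto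
qed

lemma T_bound:
  fixes s :: complex and R r :: real
  assumes "2 \<le> Re s + real (Suc i)" "norm (1 - s) \<le> R" "norm s \<le> R" "1 \<le> R" "r \<le> Re s"
  shows "norm (((1 - s) gchoose Suc i) / of_nat (Suc (Suc i)) * D0 (s + of_nat (Suc i)))
         \<le> R * (Cz * (2 powr (-r) * (1/2)^(Suc i))) * (pochhammer R (Suc i) / fact (Suc i))"
proof -
  define A where "A = pochhammer R (Suc i) / fact (Suc i)"
  define K where "K = Cz * (2 powr (-r) * (1/2)^(Suc i))"
  have A0: "0 \<le> A" unfolding A_def using poch_nonneg'[of R] assms by auto
  have K0: "0 \<le> K" unfolding K_def using Cz_nonneg by auto
  have G: "norm ((1 - s) gchoose Suc i) \<le> A"
  proof -
    have "norm ((1 - s) gchoose Suc i) \<le> pochhammer (norm (1 - s)) (Suc i) / fact (Suc i)"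
      by (rule norm_gchoose_le)
    also have "\<dots> \<le> A" unfolding A_def
      by (intro divide_right_mono poch_mono assms) auto
    finally show ?thesis .
  qed
  have w: "2 \<le> Re (s + of_nat (Suc i))" using assms(1) by simp
  have p: "2 powr (- Re (s + of_nat (Suc i))) \<le> 2 powr (-r) * (1/2)^(Suc i)"
  proof -
    have "2 powr (- Re (s + of_nat (Suc i))) = 2 powr (- Re s) * 2 powr (- real (Suc i))"
      by (simp add: powr_add[symmetric])
    also have "2 powr (- real (Suc i)) = (1/2::real)^(Suc i)"
    proof -
      have e1: "(2::real) powr real (Suc i) = 2 ^ Suc i" by (rule powr_realpow) simp
      show ?thesis by (simp only: powr_minus_divide e1 power_one_over)
    qed
    also have "2 powr (- Re s) \<le> 2 powr (-r)" using assms by simp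
    finally show ?thesis by (simp add: mult_right_mono)
  qed
  have nw: "norm (s + of_nat (Suc i) - 1) \<le> R + real i"
    using norm_triangle_ineq[of s "of_nat i"] assms by simp
  have W: "norm (D0 (s + of_nat (Suc i))) \<le> (R + real i) * K"
  proof -
    have "norm (D0 (s + of_nat (Suc i))) \<le> norm (s + of_nat (Suc i) - 1) * (Cz * 2 powr (- Re (s + of_nat (Suc i))))"
      by (rule D0_bound[OF w])
    also have "\<dots> \<le> (R + real i) * K" unfolding K_def
      by (intro mult_mono nw mult_left_mono p Cz_nonneg) (use assms(4) in \<open>auto intro!: mult_nonneg_nonneg Cz_nonneg\<close>)
    finally show ?thesis .
  qed
  have RK: "(R + real i) / real (Suc (Suc i)) \<le> R"
  proof -
    have "real i \<le> R * real i" using assms(4) by (simp add: mult_right_mono[of 1 R "real i", simplified])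
    thus ?thesis using assms(4) by (simp add: field_simps)
  qed
  have "norm (((1 - s) gchoose Suc i) / of_nat (Suc (Suc i)) * D0 (s + of_nat (Suc i)))
        = norm ((1 - s) gchoose Suc i) * (norm (D0 (s + of_nat (Suc i))) / real (Suc (Suc i)))"
    by (simp add: norm_mult norm_divide del: of_nat_Suc)
  also have "\<dots> \<le> A * ((R + real i) * K / real (Suc (Suc i)))"
    by (intro mult_mono G divide_right_mono W A0) auto
  also have "(R + real i) * K / real (Suc (Suc i)) = ((R + real i) / real (Suc (Suc i))) * K" by simp
  also have "A * (\<dots>) \<le> A * (R * K)"
    by (intro mult_left_mono mult_right_mono RK K0 A0)
  finally show ?thesis unfolding A_def K_def by (simp add: mult_ac)
qed


lemma open_H: "open (H m)" unfolding H_def by (rule open_halfspace_Re_gt)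
lemma convex_H: "convex (H m)" unfolding H_def by (rule convex_halfspace_Re_gt)

lemma cball_Re: "s \<in> cball z d \<Longrightarrow> Re z - d \<le> Re s \<and> Re s \<le> Re z + d \<and> norm s \<le> norm z + d"
proof -
  assume "s \<in> cball z d"
  hence n: "norm (z - s) \<le> d" by (simp add: dist_norm)
  have "\<bar>Re z - Re s\<bar> \<le> d" using abs_Re_le_cmod[of "z - s"] n by simp
  moreover have "norm s \<le> norm z + d" using norm_triangle_ineq2[of s z] n by (simp add: norm_minus_commute)
  ultimately show ?thesis by (simp add: abs_le_iff)
qed

lemma Phi_holo:
  assumes g: "g holomorphic_on H m" and gD: "\<And>w. 2 \<le> Re w \<Longrightarrow> g w = D0 w"
  shows "Phi g holomorphic_on H (Suc m)"
proof -
  define T where "T i s = ((1 - s) gchoose Suc i) / of_nat (Suc (Suc i)) * g (s + of_nat (Suc i))" for i s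
  have Th: "T i holomorphic_on H (Suc m)" for i
  proof -
    have "(g \<circ> (\<lambda>s. s + of_nat (Suc i))) holomorphic_on H (Suc m)"
      by (rule holomorphic_on_compose_gen[OF _ g]) (auto intro!: holomorphic_intros simp: H_def)
    hence "(\<lambda>s. g (s + of_nat (Suc i))) holomorphic_on H (Suc m)" by (simp add: o_def)
    thus ?thesis unfolding T_def[abs_def] by (intro holomorphic_intros gch_holo) auto
  qed
  have S: "(\<lambda>s. \<Sum>i. T i s) holomorphic_on H (Suc m)"
  proof (rule holomorphic_uniform_sequence[OF open_H, where f = "\<lambda>N s. \<Sum>i<N. T i s"])
    show "(\<lambda>s. \<Sum>i<N. T i s) holomorphic_on H (Suc m)" for N
      by (intro holomorphic_intros Th)
    fix z assume z: "z \<in> H (Suc m)"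
    define d where "d = (Re z - (1 - real (Suc m))) / 2"
    have d: "0 < d" using z by (simp add: d_def H_def)
    have sub: "cball z d \<subseteq> H (Suc m)"
    proof
      fix s assume "s \<in> cball z d"
      hence "Re z - d \<le> Re s" using cball_Re by blast
      thus "s \<in> H (Suc m)" using z unfolding d_def H_def by (auto simp: field_simps)
    qed
    define R where "R = norm z + d + 1"
    define r where "r = Re z - d"
    define N where "N = nat \<lceil>2 - r\<rceil>"
    define M where "M i = R * (Cz * (2 powr (-r) * (1/2)^(Suc i))) * (pochhammer R (Suc i) / fact (Suc i))" for i
    have R1: "1 \<le> R" using d by (simp add: R_def)
    have "uniform_limit (cball z d) (\<lambda>N s. \<Sum>i<N. T i s) (\<lambda>s. \<Sum>i. T i s) sequentially"
    proof (rule Weierstrass_m_test_ev)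
      show "summable M"
      proof -
        have "summable (\<lambda>i. pochhammer R (Suc i) / fact (Suc i) * (1/2)^(Suc i))"
          by (rule summable_Suc_iff[where f="\<lambda>i. pochhammer R i / fact i * (1/2)^i", THEN iffD2])
             (rule poch_series_summable, auto)
        hence "summable (\<lambda>i. (R * Cz * 2 powr (-r)) * (pochhammer R (Suc i) / fact (Suc i) * (1/2)^(Suc i)))"
          by (rule summable_mult)
        thus ?thesis unfolding M_def by (simp add: mult_ac)
      qed
      show "\<forall>\<^sub>F i in sequentially. \<forall>s\<in>cball z d. norm (T i s) \<le> M i"
        unfolding eventually_sequentially
      proof (intro exI allI impI ballI)
        fix i s assume i: "N \<le> i" and s: "s \<in> cball z d"
        from cball_Re[OF s] have rs: "r \<le> Re s" and ns: "norm s \<le> norm z + d"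
          by (auto simp: r_def)
        have "2 - r \<le> real N" unfolding N_def by linarith
        hence w2: "2 \<le> Re s + real (Suc i)" using i rs by simp
        have "T i s = ((1 - s) gchoose Suc i) / of_nat (Suc (Suc i)) * D0 (s + of_nat (Suc i))"
          unfolding T_def using gD[of "s + of_nat (Suc i)"] w2 by simp
        also have "norm \<dots> \<le> M i" unfolding M_def
        proof (rule T_bound[OF w2 _ _ R1 rs])
          show "norm (1 - s) \<le> R" using norm_triangle_ineq4[of 1 s] ns by (simp add: R_def)
          show "norm s \<le> R" using ns by (simp add: R_def)
        qed
        finally show "norm (T i s) \<le> M i" .
      qed
    qed
    thus "\<exists>d>0. cball z d \<subseteq> H (Suc m) \<and> uniform_limit (cball z d) (\<lambda>N s. \<Sum>i<N. T i s) (\<lambda>s. \<Sum>i. T i s) sequentially"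
      using d sub by blast
  qed
  have eq: "Phi g = (\<lambda>s. 2 powr (1 - s) - (\<Sum>i. T i s))"
    by (simp add: fun_eq_iff Phi_def T_def)
  show ?thesis unfolding eq by (intro holomorphic_intros S) auto
qed


lemma zD_minus1:
  assumes "1 < Re w"
  shows "(\<lambda>n. 1 / (of_nat (Suc (Suc n)) :: complex) powr w) sums (zD w - 1)"
proof -
  define t where "t n = 1 / (of_nat (Suc n) :: complex) powr w" for n
  have sn: "summable (\<lambda>n. norm (t n))" unfolding t_def norm_zterm
    by (rule summable_Suc_powr) (use assms in simp)
  have "t sums zD w" unfolding zD_def t_def[abs_def]
    using summable_sums[OF summable_norm_cancel[OF sn]] by (simp add: t_def[abs_def])
  hence "(\<lambda>n. t (Suc n)) sums (zD w - t 0)" using sums_Suc_iff[of t "zD w - t 0"] by simp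
  thus ?thesis by (simp add: t_def)
qed

lemma binom_step:
  fixes s :: complex
  shows "((1 - s) gchoose Suc (Suc j)) * (zD (s + of_nat (Suc j)) - 1)
         = - (((1 - s) gchoose Suc j) / of_nat (Suc (Suc j)) * D0 (s + of_nat (Suc j)))"
proof -
  note h = gbinomial_mult_1'[of "1 - s" "Suc j"]
  have e0: "of_nat (Suc (Suc j)) * ((1 - s) gchoose Suc (Suc j)) = ((1 - s) gchoose Suc j) * (1 - s) - of_nat (Suc j) * ((1 - s) gchoose Suc j)"
    unfolding h by simp
  have e: "of_nat (Suc (Suc j)) * ((1 - s) gchoose Suc (Suc j)) = ((1 - s) gchoose Suc j) * ((1 - s) - of_nat (Suc j))"
    unfolding e0 by (simp add: algebra_simps)
  have g2: "((1 - s) gchoose Suc (Suc j)) = ((1 - s) gchoose Suc j) * ((1 - s) - of_nat (Suc j)) / of_nat (Suc (Suc j))"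
    using e by (simp add: field_simps del: of_nat_Suc)
  have m: "(1 - s) - of_nat (Suc j) = - (s + of_nat (Suc j) - 1)" by simp
  show ?thesis unfolding D0_def g2 m by (simp add: divide_inverse algebra_simps)
qed

lemma Phi_D0:
  assumes s: "2 < Re s"
  shows "Phi D0 s = D0 s"
proof -
  define a where "a = 1 - s"
  have Ra: "Re a < -1" using s by (simp add: a_def)
  define b where "b n i = (a gchoose Suc i) * (of_nat (Suc (Suc n)) :: complex) powr (a - of_nat (Suc i))" for n i
  have row: "(\<lambda>i. b n i) sums (of_nat (Suc (Suc (Suc n))) powr a - of_nat (Suc (Suc n)) powr a)" for n
  proof -
    have "\<bar>1::real\<bar> < \<bar>real (Suc (Suc n))\<bar>" by simp
    from gen_binomial_complex''[OF this, of a]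
    have "(\<lambda>i. (a gchoose i) * of_nat (Suc (Suc n)) powr (a - of_nat i)) sums (of_nat (Suc (Suc (Suc n))) powr a)"
      by (simp add: add.commute)
    hence "(\<lambda>i. (a gchoose Suc i) * of_nat (Suc (Suc n)) powr (a - of_nat (Suc i))) sums
            (of_nat (Suc (Suc (Suc n))) powr a - of_nat (Suc (Suc n)) powr a)"
      by (subst sums_Suc_iff) simp
    thus ?thesis by (simp add: b_def)
  qed
  have tele: "(\<lambda>n. of_nat (Suc (Suc (Suc n))) powr a - of_nat (Suc (Suc n)) powr a) sums (- (2 powr a))"
  proof -
    have "(\<lambda>n. (of_nat (Suc (Suc n)) :: complex) powr a) \<longlonglongrightarrow> 0"
      by (rule tendsto_neg_powr_complex_of_nat) (use Ra in \<open>auto intro: filterlim_subseq strict_monoI\<close>)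
    from telescope_sums[OF this] show ?thesis by simp
  qed
  define u where "u n = real (Suc (Suc n)) powr (Re a)" for n
  define v where "v i = pochhammer (norm a) (Suc i) / fact (Suc i) * (1/2::real)^(Suc i)" for i
  have u: "summable u"
  proof -
    have "summable (\<lambda>n. real (Suc n) powr (Re a))" by (rule summable_Suc_powr[OF Ra])
    hence "summable (\<lambda>n. real (Suc (Suc n)) powr (Re a))" by (subst summable_Suc_iff)
    thus ?thesis unfolding u_def .
  qed
  have v: "summable v" unfolding v_def
    by (rule summable_Suc_iff[where f="\<lambda>i. pochhammer (norm a) i / fact i * (1/2)^i", THEN iffD2])
       (rule poch_series_summable, auto)
  have u0: "u n \<ge> 0" for n by (simp add: u_def)
  have v0: "v i \<ge> 0" for i unfolding v_def
    by (intro mult_nonneg_nonneg divide_nonneg_pos poch_nonneg') auto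
  have bnd: "norm (b n i) \<le> u n * v i" for n i
  proof -
    have "norm ((of_nat (Suc (Suc n)) :: complex) powr (a - of_nat (Suc i))) = real (Suc (Suc n)) powr (Re a - real (Suc i))"
      by (subst norm_powr_real_powr) auto
    also have "\<dots> = real (Suc (Suc n)) powr (Re a) * real (Suc (Suc n)) powr (- real (Suc i))"
      by (subst powr_add[symmetric]) (simp add: algebra_simps)
    also have "real (Suc (Suc n)) powr (- real (Suc i)) \<le> 2 powr (- real (Suc i))"
      by (rule powr_mono2') auto
    also have "(2::real) powr (- real (Suc i)) = (1/2)^(Suc i)"
    proof -
      have e1: "(2::real) powr real (Suc i) = 2 ^ Suc i" by (rule powr_realpow) simp
      show ?thesis by (simp only: powr_minus_divide e1 power_one_over)
    qed
    finally have p: "norm ((of_nat (Suc (Suc n)) :: complex) powr (a - of_nat (Suc i))) \<le> u n * (1/2)^(Suc i)"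
      by (simp add: u_def mult_left_mono)
    have "norm (b n i) = norm (a gchoose Suc i) * norm ((of_nat (Suc (Suc n)) :: complex) powr (a - of_nat (Suc i)))"
      by (simp add: b_def norm_mult)
    also have "\<dots> \<le> (pochhammer (norm a) (Suc i) / fact (Suc i)) * (u n * (1/2)^(Suc i))"
    proof -
      have pn: "0 \<le> pochhammer (norm a) (Suc i) / fact (Suc i)" by (intro divide_nonneg_pos poch_nonneg') auto
      show ?thesis by (intro mult_mono norm_gchoose_le p pn) auto
    qed
    finally show ?thesis by (simp add: v_def mult_ac)
  qed
  note sw = double_swap[of b u v, OF bnd u v u0 v0]
  have lhs: "(\<Sum>n. \<Sum>i. b n i) = - (2 powr a)"
    using tele row by (simp add: sums_iff)
  have col: "(\<lambda>n. b n i) sums ((a gchoose Suc i) * (zD (s + of_nat i) - 1))" for i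
  proof -
    have "1 < Re (s + of_nat i)" using s by simp
    from sums_mult[OF zD_minus1[OF this], of "a gchoose Suc i"]
    have "(\<lambda>n. (a gchoose Suc i) * (1 / (of_nat (Suc (Suc n)) :: complex) powr (s + of_nat i))) sums
           ((a gchoose Suc i) * (zD (s + of_nat i) - 1))" .
    moreover have "(of_nat (Suc (Suc n)) :: complex) powr (a - of_nat (Suc i)) = 1 / (of_nat (Suc (Suc n)) :: complex) powr (s + of_nat i)" for n
    proof -
      have ee: "a - of_nat (Suc i) = - (s + of_nat i)" by (simp add: a_def)
      show ?thesis unfolding ee powr_minus by (simp add: divide_inverse)
    qed
    ultimately show ?thesis by (simp add: b_def)
  qed
  define c where "c i = (a gchoose Suc i) * (zD (s + of_nat i) - 1)" for i
  have rhs: "(\<Sum>i. \<Sum>n. b n i) = (\<Sum>i. c i)"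
    using col by (simp add: sums_iff c_def)
  have sc: "summable c" using sw(2) col unfolding c_def[abs_def] by (simp add: sums_iff)
  have c0: "c 0 = - D0 s" by (simp add: c_def D0_def a_def algebra_simps)
  have cS: "c (Suc j) = - (((1 - s) gchoose Suc j) / of_nat (Suc (Suc j)) * D0 (s + of_nat (Suc j)))" for j
    unfolding c_def a_def by (rule binom_step)
  have "(\<Sum>j. c (Suc j)) = (\<Sum>i. c i) - c 0" by (rule suminf_split_head[OF sc])
  hence "(\<Sum>i. c i) = - D0 s + (\<Sum>j. c (Suc j))" using c0 by simp
  also have "(\<Sum>j. c (Suc j)) = - (\<Sum>j. ((1 - s) gchoose Suc j) / of_nat (Suc (Suc j)) * D0 (s + of_nat (Suc j)))"
  proof -
    have "summable (\<lambda>j. c (Suc j))" using sc by (subst summable_Suc_iff)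
    hence sm: "summable (\<lambda>j. ((1 - s) gchoose Suc j) / of_nat (Suc (Suc j)) * D0 (s + of_nat (Suc j)))"
      unfolding cS by (rule summable_minus_iff[THEN iffD1])
    show ?thesis unfolding cS by (rule suminf_minus[OF sm])
  qed
  finally have "- (2 powr a) = - D0 s - (\<Sum>j. ((1 - s) gchoose Suc j) / of_nat (Suc (Suc j)) * D0 (s + of_nat (Suc j)))"
    using sw(3) lhs rhs by simp
  thus ?thesis unfolding Phi_def a_def by (simp add: algebra_simps)
qed




lemma summable_reindex_nonneg:
  fixes f :: "nat \<Rightarrow> real"
  assumes f: "summable f" and f0: "\<And>n. 0 \<le> f n" and g: "strict_mono g"
  shows "summable (\<lambda>n. f (g n))"
proof (rule summableI_nonneg_bounded)
  show "0 \<le> f (g n)" for n by (rule f0)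
  fix n
  have "(\<Sum>k<n. f (g k)) = sum f (g ` {..<n})"
    by (subst sum.reindex) (use strict_mono_imp_inj_on[OF g] in \<open>auto simp: inj_on_def\<close>)
  also have "\<dots> \<le> sum f {..<g n}"
    by (rule sum_mono2) (use g f0 in \<open>auto simp: strict_mono_def\<close>)
  also have "\<dots> \<le> suminf f" by (rule sum_le_suminf[OF f]) (use f0 in auto)
  finally show "(\<Sum>k<n. f (g k)) \<le> suminf f" .
qed

lemma gch_neg: "((-s::complex) gchoose j) = (-1)^j * pochhammer s j / fact j"
  by (simp add: gbinomial_pochhammer)

lemma odd_binom:
  fixes s :: complex and x :: real
  assumes x: "0 \<le> x" "x < 1"
  shows "(\<lambda>k. pochhammer s (2*k+3) / fact (2*k+3) * of_real x ^ (2*k+3)) sums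
           ((of_real (1 - x) powr (-s) - of_real (1 + x) powr (-s)) / 2 - s * of_real x)"
proof -
  define E where "E j = pochhammer s j / fact j * of_real x ^ j * ((1 - (-1)^j) / 2)" for j
  have h1: "(\<lambda>j. ((-s) gchoose j) * (- of_real x)^j) sums (1 + (- of_real x)) powr (-s)"
    by (rule gen_binomial_complex) (use x in simp)
  have h2: "(\<lambda>j. ((-s) gchoose j) * (of_real x)^j) sums (1 + of_real x) powr (-s)"
    by (rule gen_binomial_complex) (use x in simp)
  have "(\<lambda>j. (((-s) gchoose j) * (- of_real x)^j - ((-s) gchoose j) * (of_real x)^j) / 2) sums
          (((1 + (- of_real x)) powr (-s) - (1 + of_real x) powr (-s)) / 2)"
    by (intro sums_divide sums_diff h1 h2)
  moreover have "(((-s) gchoose j) * (- of_real x)^j - ((-s) gchoose j) * (of_real x)^j) / 2 = E j" for j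
  proof -
    have "(-1::complex)^j * (-1)^j = 1" by (simp flip: power_add)
    hence p1: "((-s) gchoose j) * (- of_real x)^j = pochhammer s j / fact j * of_real x ^ j"
      unfolding gch_neg power_minus[of "of_real x" j] by (simp add: field_simps)
    have p2: "((-s) gchoose j) * (of_real x)^j = (-1)^j * (pochhammer s j / fact j * of_real x ^ j)"
      unfolding gch_neg by simp
    show ?thesis unfolding E_def p1 p2 by (simp add: field_simps)
  qed
  moreover have "(1 + (- complex_of_real x)) = of_real (1 - x)" by simp
  ultimately have sE: "E sums ((of_real (1 - x) powr (-s) - of_real (1 + x) powr (-s)) / 2)" by simp
  have E0: "E 0 = 0" and E1: "E 1 = s * of_real x" by (simp_all add: E_def)
  have "(\<lambda>j. E (Suc (Suc j))) sums ((of_real (1 - x) powr (-s) - of_real (1 + x) powr (-s)) / 2 - s * of_real x)"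
  proof -
    define T where "T = (of_real (1 - x) powr (-s) - of_real (1 + x) powr (-s)) / 2"
    have a: "(\<lambda>j. E (Suc j)) sums (T - E 0)" by (subst sums_Suc_iff) (simp add: sE[folded T_def])
    have "(\<lambda>j. E (Suc (Suc j))) sums (T - E 0 - E 1)"
      by (subst sums_Suc_iff[where f="\<lambda>j. E (Suc j)"]) (simp add: a)
    thus ?thesis using E0 E1 by (simp add: T_def)
  qed
  moreover have "strict_mono (\<lambda>k::nat. 2*k+1)" by (rule strict_monoI) simp
  moreover have "E (Suc (Suc n)) = 0" if "n \<notin> range (\<lambda>k::nat. 2*k+1)" for n
  proof -
    have "even n"
    proof (rule ccontr)
      assume "odd n"
      hence "n = 2 * (n div 2) + 1" by presburger
      hence "n \<in> range (\<lambda>k::nat. 2*k+1)" by (metis rangeI)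
      thus False using that by blast
    qed
    hence "even (Suc (Suc n))" by simp
    hence "(-1::complex) ^ (Suc (Suc n)) = 1" by (rule neg_one_even_power)
    thus ?thesis unfolding E_def by (simp only:) simp
  qed
  ultimately have "(\<lambda>k. E (Suc (Suc (2*k+1)))) sums ((of_real (1 - x) powr (-s) - of_real (1 + x) powr (-s)) / 2 - s * of_real x)"
    using sums_mono_reindex[of "\<lambda>k. 2*k+1" "\<lambda>j. E (Suc (Suc j))"] by blast
  moreover have "E (Suc (Suc (2*k+1))) = pochhammer s (2*k+3) / fact (2*k+3) * of_real x ^ (2*k+3)" for k
  proof -
    have ev: "Suc (Suc (2*k+1)) = 2*k+3" by simp
    have m1: "(-1::complex)^(2*k+3) = -1" by (simp add: power_add power_mult)
    have "E (2*k+3) = (pochhammer s (2*k+3) / fact (2*k+3) * of_real x ^ (2*k+3)) * ((1 - (-1)) / 2)"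
      unfolding E_def m1 ..
    thus ?thesis unfolding ev by simp
  qed
  ultimately show ?thesis by simp
qed


lemma alg1: "2 * M * P * ((A - B) / 2 - S * X) = M * (P * A - P * B) - S * P * (2 * M * (X::complex))"
  by (simp add: field_simps)

lemma powr_nat_complex: "(of_nat (Suc n) :: complex) powr (of_nat k) = of_nat (Suc n) ^ k"
  by (rule powr_nat') (simp del: of_nat_Suc)

lemma row_sum:
  fixes s :: complex and n :: nat
  shows "(\<lambda>k. (1/4)^(Suc k) * (1 / (of_nat (Suc n)) powr (s + 2 * of_nat (Suc k))) *
              (pochhammer s (2*k+3) / fact (2*k+3))) sums
         (of_nat (Suc n) * (of_real (real n + 1/2) powr (-s) - of_real (real (Suc n) + 1/2) powr (-s))
            - s * (of_nat (Suc n) powr (-s)))"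
proof -
  define m where "m = real (Suc n)"
  define x where "x = 1 / (2 * m)"
  define M where "M = (of_nat (Suc n) :: complex)"
  have m1: "1 \<le> m" by (simp add: m_def)
  have Mm: "M = of_real m" by (simp add: M_def m_def)
  have M0: "M \<noteq> 0" unfolding M_def by (simp del: of_nat_Suc)
  have x: "0 \<le> x" "x < 1" using m1 by (auto simp: x_def field_simps)
  note ob = sums_mult[OF odd_binom[OF x, of s], of "2 * M * M powr (-s)"]
  have trm: "2 * M * M powr (-s) * (pochhammer s (2*k+3) / fact (2*k+3) * of_real x ^ (2*k+3)) =
     (1/4)^(Suc k) * (1 / M powr (s + 2 * of_nat (Suc k))) * (pochhammer s (2*k+3) / fact (2*k+3))" for k
  proof -
    have e1: "M powr (s + 2 * of_nat (Suc k)) = M powr s * M ^ (2 * Suc k)"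
    proof -
      have "M powr (s + 2 * of_nat (Suc k)) = M powr s * M powr (of_nat (2 * Suc k))"
        by (simp add: powr_add)
      thus ?thesis unfolding M_def powr_nat_complex .
    qed
    have e2: "1 / M powr (s + 2 * of_nat (Suc k)) = M powr (-s) / M ^ (2 * Suc k)"
      unfolding e1 by (simp add: powr_minus divide_inverse)
    have X: "of_real x = 1 / (2 * M)" by (simp add: x_def Mm)
    have e3: "(of_real x :: complex) ^ (2*k+3) = 1 / (2 * M) * (1/4)^(Suc k) / M ^ (2 * Suc k)"
    proof -
      have "(2*k+3) = Suc (2 * Suc k)" by simp
      hence "(of_real x :: complex) ^ (2*k+3) = (1 / (2*M)) * (1 / (2*M)) ^ (2 * Suc k)"
        unfolding X by (simp only: power_Suc)
      also have "(1 / (2*M)) ^ (2 * Suc k) = (1/4)^(Suc k) / M ^ (2 * Suc k)"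
      proof -
        have f4: "(2::complex)^(2 * Suc k) = 4^(Suc k)" by (simp only: power_mult) simp
        have "(1 / (2*M)) ^ (2 * Suc k) = 1 / (2^(2*Suc k) * M^(2*Suc k))"
          by (simp only: power_divide power_one power_mult_distrib)
        also have "\<dots> = 1 / (4^(Suc k) * M^(2*Suc k))" by (simp only: f4)
        also have "\<dots> = (1/4)^(Suc k) / M^(2*Suc k)" by (simp only: power_one_over divide_divide_eq_left)
        finally show ?thesis .
      qed
      finally show ?thesis by simp
    qed
    show ?thesis unfolding e2 e3 using M0 by (simp add: field_simps)
  qed
  have val: "2 * M * M powr (-s) * ((of_real (1 - x) powr (-s) - of_real (1 + x) powr (-s)) / 2 - s * of_real x)
     = of_nat (Suc n) * (of_real (real n + 1/2) powr (-s) - of_real (real (Suc n) + 1/2) powr (-s))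
            - s * (of_nat (Suc n) powr (-s))"
  proof -
    have a1: "M powr (-s) * of_real (1 - x) powr (-s) = of_real (real n + 1/2) powr (-s)"
    proof -
      have "M powr (-s) * of_real (1 - x) powr (-s) = (M * of_real (1 - x)) powr (-s)"
        by (rule powr_times_real[symmetric]) (use x m1 in \<open>auto simp: Mm\<close>)
      also have "M * of_real (1 - x) = of_real (real n + 1/2)"
      proof -
        have rr: "m * (1 - x) = real n + 1/2" using m1 by (simp add: x_def m_def field_simps)
        show ?thesis unfolding Mm of_real_mult[symmetric] rr ..
      qed
      finally show ?thesis .
    qed
    have a2: "M powr (-s) * of_real (1 + x) powr (-s) = of_real (real (Suc n) + 1/2) powr (-s)"
    proof -
      have "M powr (-s) * of_real (1 + x) powr (-s) = (M * of_real (1 + x)) powr (-s)"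
        by (rule powr_times_real[symmetric]) (use x m1 in \<open>auto simp: Mm\<close>)
      also have "M * of_real (1 + x) = of_real (real (Suc n) + 1/2)"
      proof -
        have rr: "m * (1 + x) = real (Suc n) + 1/2" using m1 by (simp add: x_def m_def field_simps)
        show ?thesis unfolding Mm of_real_mult[symmetric] rr ..
      qed
      finally show ?thesis .
    qed
    have a3: "2 * M * of_real x = 1" using M0 by (simp add: x_def Mm field_simps)
    have "2 * M * M powr (-s) * ((of_real (1 - x) powr (-s) - of_real (1 + x) powr (-s)) / 2 - s * of_real x)
        = M * (M powr (-s) * of_real (1 - x) powr (-s) - M powr (-s) * of_real (1 + x) powr (-s))
          - s * M powr (-s) * (2 * M * of_real x)"
      by (rule alg1)
    also have "\<dots> = M * (of_real (real n + 1/2) powr (-s) - of_real (real (Suc n) + 1/2) powr (-s))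
          - s * M powr (-s)" unfolding a1 a2 a3 by simp
    finally show ?thesis by (simp add: M_def)
  qed
  have s1: "(\<lambda>k. (1/4)^(Suc k) * (1 / M powr (s + 2 * of_nat (Suc k))) * (pochhammer s (2*k+3) / fact (2*k+3))) sums
     (2 * M * M powr (-s) * ((of_real (1 - x) powr (-s) - of_real (1 + x) powr (-s)) / 2 - s * of_real x))"
    using ob by (simp only: trm)
  from s1[unfolded val] show ?thesis by (simp only: M_def)
qed




lemma zD_sums: "1 < Re w \<Longrightarrow> (\<lambda>n. 1 / (of_nat (Suc n) :: complex) powr w) sums zD w"
proof -
  assume w: "1 < Re w"
  have "summable (\<lambda>n. norm (1 / (of_nat (Suc n) :: complex) powr w))"
    unfolding norm_zterm by (rule summable_Suc_powr) (use w in simp)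
  from summable_sums[OF summable_norm_cancel[OF this]] show ?thesis by (simp add: zD_def)
qed

lemma zD_sums': "1 < Re w \<Longrightarrow> (\<lambda>n. (of_nat (Suc n) :: complex) powr (-w)) sums zD w"
  using zD_sums[of w] by (simp add: powr_minus divide_inverse)

lemma half_powr: "(of_real (1/2) :: complex) powr (-s) = 2 powr s"
proof -
  have "(of_real 2 * of_real (1/2) :: complex) powr s = of_real 2 powr s * of_real (1/2) powr s"
    by (rule powr_times_real) auto
  hence "1 = (2::complex) powr s * of_real (1/2) powr s" by simp
  hence "of_real (1/2) powr s = inverse ((2::complex) powr s)"
    by (simp add: field_simps inverse_eq_divide)
  thus ?thesis by (simp add: powr_minus)
qed

lemma odd_sums:
  assumes s: "1 < Re s"
  shows "(\<lambda>n. (of_nat (2*n+1) :: complex) powr (-s)) sums (zD s - 2 powr (-s) * zD s)"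
proof -
  define f where "f j = (of_nat (Suc j) :: complex) powr (-s)" for j
  have fs: "f sums zD s" unfolding f_def by (rule zD_sums'[OF s])
  from sums_group[OF fs, of 2] have g: "(\<lambda>n. f (2*n) + f (2*n+1)) sums zD s"
    by (simp add: mult.commute numeral_2_eq_2)
  have e: "f (2*n+1) = 2 powr (-s) * f n" for n
  proof -
    have "(of_nat (Suc (2*n+1)) :: complex) = of_real 2 * of_real (real (Suc n))" by simp
    hence "f (2*n+1) = (of_real 2 * of_real (real (Suc n))) powr (-s)" by (simp add: f_def)
    also have "\<dots> = of_real 2 powr (-s) * of_real (real (Suc n)) powr (-s)"
      by (rule powr_times_real) auto
    finally show ?thesis by (simp add: f_def)
  qed
  have o: "(\<lambda>n. f (2*n+1)) sums (2 powr (-s) * zD s)"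
    unfolding e by (rule sums_mult[OF fs])
  have "(\<lambda>n. (f (2*n) + f (2*n+1)) - f (2*n+1)) sums (zD s - 2 powr (-s) * zD s)"
    by (rule sums_diff[OF g o])
  thus ?thesis by (simp add: f_def)
qed

lemma A_sums:
  assumes s: "1 < Re s"
  shows "(\<lambda>n. (of_real (real n + 1/2) :: complex) powr (-s)) sums ((2 powr s - 1) * zD s)"
proof -
  have e: "(of_real (real n + 1/2) :: complex) powr (-s) = 2 powr s * (of_nat (2*n+1) :: complex) powr (-s)" for n
  proof -
    have eq: "(of_real (real n + 1/2) :: complex) = of_real (real (2*n+1)) * of_real (1/2)" by simp
    have "(of_real (real n + 1/2) :: complex) powr (-s) = (of_real (real (2*n+1)) * of_real (1/2)) powr (-s)"
      by (simp only: eq)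
    also have "\<dots> = of_real (real (2*n+1)) powr (-s) * of_real (1/2) powr (-s)"
      by (rule powr_times_real) auto
    finally have "(of_real (real n + 1/2) :: complex) powr (-s) = of_real (real (2*n+1)) powr (-s) * of_real (1/2) powr (-s)" .
    thus ?thesis unfolding half_powr of_real_of_nat_eq by (simp only: mult.commute)
  qed
  have "(\<lambda>n. 2 powr s * (of_nat (2*n+1) :: complex) powr (-s)) sums (2 powr s * (zD s - 2 powr (-s) * zD s))"
    by (rule sums_mult[OF odd_sums[OF s]])
  moreover have "(2::complex) powr s * (zD s - 2 powr (-s) * zD s) = (2 powr s - 1) * zD s"
  proof -
    have "(2::complex) powr s * 2 powr (-s) = 1" by (simp add: powr_minus)
    thus ?thesis by (simp add: algebra_simps)
  qed
  ultimately show ?thesis unfolding e by simp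
qed

lemma NA_lim:
  assumes s: "1 < Re s"
  shows "(\<lambda>N. of_nat N * (of_real (real N + 1/2) :: complex) powr (-s)) \<longlonglongrightarrow> 0"
proof (rule Lim_null_comparison)
  show "\<forall>\<^sub>F N in sequentially. norm (of_nat N * (of_real (real N + 1/2) :: complex) powr (-s)) \<le> (real N + 1/2) powr (1 - Re s)"
  proof (intro always_eventually allI)
    fix N :: nat
    have "norm (of_nat N * (of_real (real N + 1/2) :: complex) powr (-s)) = real N * (real N + 1/2) powr (- Re s)"
      by (simp add: norm_mult norm_powr_real_powr)
    also have "\<dots> \<le> (real N + 1/2) * (real N + 1/2) powr (- Re s)"
      by (intro mult_right_mono) auto
    also have "\<dots> = (real N + 1/2) powr (1 - Re s)"
      by (simp add: powr_diff powr_minus_divide)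
    finally show "norm (of_nat N * (of_real (real N + 1/2) :: complex) powr (-s)) \<le> (real N + 1/2) powr (1 - Re s)" .
  qed
  show "(\<lambda>N. (real N + 1/2) powr (1 - Re s)) \<longlonglongrightarrow> 0"
  proof (rule tendsto_neg_powr)
    show "1 - Re s < 0" using s by simp
    show "LIM N sequentially. real N + 1/2 :> at_top"
      using filterlim_tendsto_add_at_top[OF tendsto_const[of "1/2::real"] filterlim_real_sequentially]
      by (simp add: add.commute)
  qed
qed

lemma tele_partial:
  fixes A :: "nat \<Rightarrow> complex"
  shows "(\<Sum>n<N. of_nat (Suc n) * (A n - A (Suc n))) = (\<Sum>n<N. A n) - of_nat N * A N"
  by (induction N) (simp_all add: algebra_simps)

lemma rows_total:
  assumes s: "1 < Re s"
  shows "(\<lambda>n. of_nat (Suc n) * (of_real (real n + 1/2) powr (-s) - of_real (real (Suc n) + 1/2) powr (-s))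
            - s * (of_nat (Suc n) powr (-s))) sums ((2 powr s - 1 - s) * zD s)"
proof -
  define A where "A n = (of_real (real n + 1/2) :: complex) powr (-s)" for n
  have "(\<lambda>N. (\<Sum>n<N. A n) - of_nat N * A N) \<longlonglongrightarrow> (2 powr s - 1) * zD s - 0"
    by (intro tendsto_diff) (use A_sums[OF s] NA_lim[OF s] in \<open>auto simp: sums_def A_def\<close>)
  hence "(\<lambda>n. of_nat (Suc n) * (A n - A (Suc n))) sums ((2 powr s - 1) * zD s)"
    unfolding sums_def tele_partial by simp
  from sums_diff[OF this sums_mult[OF zD_sums'[OF s], of s]]
  show ?thesis by (simp add: A_def algebra_simps)
qed




lemma main_id:
  assumes s: "1 < Re s"
  shows "(\<lambda>k. (1/4)^(Suc k) * zD (s + 2 * of_nat (Suc k)) * (pochhammer s (2*k+3) / fact (2*k+3)))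
           sums ((2 powr s - 1 - s) * zD s)"
proof -
  define a where "a n k = (1/4)^(Suc k) * (1 / (of_nat (Suc n) :: complex) powr (s + 2 * of_nat (Suc k))) *
       (pochhammer s (2*k+3) / fact (2*k+3))" for n k
  define u where "u n = real (Suc n) powr (- Re s)" for n
  define F where "F j = pochhammer (norm s) j / fact j * (1/2::real)^j" for j
  define v where "v k = 2 * F (2*k+3)" for k
  have u: "summable u" unfolding u_def by (rule summable_Suc_powr) (use s in simp)
  have F: "summable F" unfolding F_def by (rule poch_series_summable) auto
  have F0: "0 \<le> F j" for j unfolding F_def by (intro mult_nonneg_nonneg divide_nonneg_pos poch_nonneg') auto
  have v: "summable v" unfolding v_def
    by (intro summable_mult summable_reindex_nonneg[OF F F0]) (rule strict_monoI, simp)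
  have u0: "0 \<le> u n" for n by (simp add: u_def)
  have v0: "0 \<le> v k" for k by (simp add: v_def F0)
  have bnd: "norm (a n k) \<le> u n * v k" for n k
  proof -
    have n1: "norm (1 / (of_nat (Suc n) :: complex) powr (s + 2 * of_nat (Suc k))) \<le> u n"
      unfolding norm_zterm u_def by (intro powr_mono) auto
    have p: "norm (pochhammer s (2*k+3) / fact (2*k+3)) \<le> pochhammer (norm s) (2*k+3) / fact (2*k+3)"
      by (simp add: norm_divide divide_right_mono norm_poch_le)
    have q: "(1/4::real)^(Suc k) * (pochhammer (norm s) (2*k+3) / fact (2*k+3)) = v k"
    proof -
      have hh: "(1/2::real)^(2*k+3) = (1/2) * (1/4)^(Suc k)"
      proof -
        have "(1/2::real)^(2*k+3) = (1/2) * ((1/2)^2)^(Suc k)"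
          by (simp only: power_mult[symmetric]) (simp add: numeral_3_eq_3 mult.commute)
        moreover have h4: "(1/2::real)^2 = 1/4" by (simp add: power2_eq_square)
        ultimately show ?thesis by (simp only: h4)
      qed
      show ?thesis unfolding v_def F_def hh by (simp only: mult_ac)
    qed
    have "norm (a n k) = (1/4)^(Suc k) * norm (1 / (of_nat (Suc n) :: complex) powr (s + 2 * of_nat (Suc k))) *
          norm (pochhammer s (2*k+3) / fact (2*k+3))"
    proof -
      have n4: "norm ((1/4::complex)^(Suc k)) = (1/4)^(Suc k)" by (simp add: norm_power norm_divide)
      show ?thesis unfolding a_def norm_mult n4 ..
    qed
    also have "\<dots> \<le> (1/4)^(Suc k) * u n * (pochhammer (norm s) (2*k+3) / fact (2*k+3))"
      by (intro mult_mono mult_left_mono n1 p) (auto intro!: mult_nonneg_nonneg u0)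
    also have "\<dots> = u n * v k" by (simp only: q[symmetric] mult_ac)
    finally show ?thesis .
  qed
  note sw = double_swap[of a u v, OF bnd u v u0 v0]
  define R where "R n = of_nat (Suc n) * (of_real (real n + 1/2) powr (-s) - of_real (real (Suc n) + 1/2) powr (-s))
            - s * (of_nat (Suc n) powr (-s))" for n
  have row: "(\<lambda>k. a n k) sums R n" for n unfolding a_def R_def by (rule row_sum)
  have col: "(\<lambda>n. a n k) sums ((1/4)^(Suc k) * zD (s + 2 * of_nat (Suc k)) * (pochhammer s (2*k+3) / fact (2*k+3)))" for k
  proof -
    have "1 < Re (s + 2 * of_nat (Suc k))" using s by simp
    from sums_mult2[OF sums_mult[OF zD_sums[OF this], of "(1/4)^(Suc k)"], of "pochhammer s (2*k+3) / fact (2*k+3)"]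
    show ?thesis unfolding a_def .
  qed
  have "(\<Sum>n. \<Sum>k. a n k) = (\<Sum>n. R n)" using row by (simp add: sums_iff)
  also have "\<dots> = (2 powr s - 1 - s) * zD s" using rows_total[OF s] unfolding R_def by (simp add: sums_iff)
  finally have tot: "(\<Sum>k. \<Sum>n. a n k) = (2 powr s - 1 - s) * zD s" using sw(3) by simp
  have "(\<lambda>k. \<Sum>n. a n k) sums ((2 powr s - 1 - s) * zD s)"
    using summable_sums[OF sw(2)] tot by simp
  moreover have "(\<Sum>n. a n k) = (1/4)^(Suc k) * zD (s + 2 * of_nat (Suc k)) * (pochhammer s (2*k+3) / fact (2*k+3))" for k
    using col[of k] by (simp add: sums_iff)
  ultimately show ?thesis by simp
qed





primrec Dseq :: "nat \<Rightarrow> complex \<Rightarrow> complex" where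
  "Dseq 0 = D0"
| "Dseq (Suc m) = Phi (Dseq m)"

lemma H0: "H 0 = {s. 1 < Re s}" by (simp add: H_def)

lemma D0_holo: "D0 holomorphic_on {s. 1 < Re s}"
proof -
  have "(\<lambda>s. (s - 1) * (zD s - 1)) holomorphic_on {s. 1 < Re s}"
    by (intro holomorphic_intros zD_holo)
  thus ?thesis by (simp add: D0_def[abs_def])
qed

lemma Phi_cong:
  assumes "\<And>w. 1 < Re w \<Longrightarrow> g w = g' w" "0 < Re s"
  shows "Phi g s = Phi g' s"
  unfolding Phi_def using assms by (simp add: add_pos_nonneg)

lemma conn_half: "connected {s::complex. c < Re s}"
  by (rule convex_connected, rule convex_halfspace_Re_gt)

lemma Dseq_props: "Dseq m holomorphic_on H m \<and> (\<forall>s. 1 < Re s \<longrightarrow> Dseq m s = D0 s)"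
proof (induction m)
  case 0
  show ?case using D0_holo by (simp add: H0)
next
  case (Suc m)
  have gD: "\<And>w. 2 \<le> Re w \<Longrightarrow> Dseq m w = D0 w" using Suc.IH by auto
  have hol: "Phi (Dseq m) holomorphic_on H (Suc m)"
    by (rule Phi_holo) (use Suc.IH gD in auto)
  have sub1: "{s. 1 < Re s} \<subseteq> H (Suc m)" by (auto simp: H_def)
  have agree: "Phi (Dseq m) s = D0 s" if s: "1 < Re s" for s
  proof (rule analytic_continuation_open[of "{s. 2 < Re s}" "{s. 1 < Re s}" "Phi (Dseq m)" D0 s])
    show "open {s::complex. 2 < Re s}" "open {s::complex. 1 < Re s}"
      by (auto intro: open_halfspace_Re_gt)
    show "{s::complex. 2 < Re s} \<noteq> {}" by (intro ex_in_conv[THEN iffD1] exI[of _ 3]) simp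
    show "connected {s::complex. 1 < Re s}" by (rule conn_half)
    show "{s::complex. 2 < Re s} \<subseteq> {s. 1 < Re s}" by auto
    show "Phi (Dseq m) holomorphic_on {s. 1 < Re s}" by (rule holomorphic_on_subset[OF hol sub1])
    show "D0 holomorphic_on {s. 1 < Re s}" by (rule D0_holo)
    show "s \<in> {s. 1 < Re s}" using s by simp
    fix z assume z: "z \<in> {s. 2 < Re s}"
    have "Phi (Dseq m) z = Phi D0 z" by (rule Phi_cong) (use Suc.IH z in auto)
    also have "\<dots> = D0 z" by (rule Phi_D0) (use z in auto)
    finally show "Phi (Dseq m) z = D0 z" .
  qed
  show ?case using hol agree by simp
qed

lemma H_mono: "m \<le> m' \<Longrightarrow> H m \<subseteq> H m'" by (auto simp: H_def)

lemma Dseq_coh: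
  assumes "m \<le> m'" "s \<in> H m"
  shows "Dseq m s = Dseq m' s"
proof (rule analytic_continuation_open[of "{s. 1 < Re s}" "H m" "Dseq m" "Dseq m'" s])
  show "open {s::complex. 1 < Re s}" by (rule open_halfspace_Re_gt)
  show "open (H m)" by (rule open_H)
  show "{s::complex. 1 < Re s} \<noteq> {}" by (intro ex_in_conv[THEN iffD1] exI[of _ 2]) simp
  show "connected (H m)" unfolding H_def by (rule conn_half)
  show "{s::complex. 1 < Re s} \<subseteq> H m" by (auto simp: H_def)
  show "Dseq m holomorphic_on H m" using Dseq_props by blast
  show "Dseq m' holomorphic_on H m" using Dseq_props[of m'] H_mono[OF assms(1)] holomorphic_on_subset by blast
  show "s \<in> H m" by fact
  fix z assume "z \<in> {s. 1 < Re s}"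
  thus "Dseq m z = Dseq m' z" using Dseq_props[of m] Dseq_props[of m'] by auto
qed

definition idx :: "complex \<Rightarrow> nat" where "idx s = Suc (nat \<lceil>1 - Re s\<rceil>)"

lemma in_H_idx: "s \<in> H (idx s)"
  unfolding H_def idx_def by simp linarith

definition Dfull :: "complex \<Rightarrow> complex" where "Dfull s = Dseq (idx s) s"

lemma Dfull_eq: "s \<in> H m \<Longrightarrow> Dfull s = Dseq m s"
  unfolding Dfull_def
  by (cases "idx s \<le> m") (auto intro: Dseq_coh in_H_idx simp: Dseq_coh[symmetric])

lemma Dfull_holo: "Dfull holomorphic_on UNIV"
  unfolding holomorphic_on_def
proof
  fix x :: complex assume "x \<in> UNIV"
  have "Dfull holomorphic_on H (idx x)"
    by (rule holomorphic_transform[of "Dseq (idx x)"]) (use Dseq_props Dfull_eq in auto)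
  hence "Dfull field_differentiable at x"
    by (rule holomorphic_on_imp_differentiable_at[OF _ open_H in_H_idx])
  thus "Dfull field_differentiable at x within UNIV" by simp
qed

lemma Dfull_D0: "1 < Re s \<Longrightarrow> Dfull s = D0 s"
  using Dfull_eq[of s 0] by (simp add: H0)

lemma rz_exists: "\<exists>f. f holomorphic_on (UNIV - {1}) \<and>
      (\<forall>s. 1 < Re s \<longrightarrow> f s = (\<Sum>n. 1 / (of_nat (Suc n)) powr s))"
proof (intro exI conjI allI impI)
  show "(\<lambda>s. 1 + Dfull s / (s - 1)) holomorphic_on (UNIV - {1})"
    by (intro holomorphic_intros holomorphic_on_subset[OF Dfull_holo]) auto
  fix s :: complex assume s: "1 < Re s"
  hence "s \<noteq> 1" by auto
  thus "1 + Dfull s / (s - 1) = (\<Sum>n. 1 / (of_nat (Suc n)) powr s)"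
    using s by (simp add: Dfull_D0 D0_def zD_def)
qed

lemma rz_props: "riemann_zeta holomorphic_on (UNIV - {1})"
  "\<And>s. 1 < Re s \<Longrightarrow> riemann_zeta s = zD s"
  using someI_ex[OF rz_exists] unfolding riemann_zeta_def[symmetric] by (auto simp: zD_def)


lemma sum_v: "0 \<le> R \<Longrightarrow> summable (\<lambda>k. (1/4::real)^(Suc k) * (pochhammer R (2*k+3) / fact (2*k+3)))"
proof -
  assume R: "0 \<le> R"
  define F where "F j = pochhammer R j / fact j * (1/2::real)^j" for j
  have F: "summable F" unfolding F_def by (rule poch_series_summable) auto
  have F0: "0 \<le> F j" for j unfolding F_def using R by (intro mult_nonneg_nonneg divide_nonneg_pos poch_nonneg') auto
  have "summable (\<lambda>k. 2 * F (2*k+3))"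
    by (intro summable_mult summable_reindex_nonneg[OF F F0]) (rule strict_monoI, simp)
  moreover have "(1/4::real)^(Suc k) * (pochhammer R (2*k+3) / fact (2*k+3)) = 2 * F (2*k+3)" for k
  proof -
    have hh: "(1/2::real)^(2*k+3) = (1/2) * (1/4)^(Suc k)"
    proof -
      have "(1/2::real)^(2*k+3) = (1/2) * ((1/2)^2)^(Suc k)"
        by (simp only: power_mult[symmetric]) (simp add: numeral_3_eq_3 mult.commute)
      moreover have h4: "(1/2::real)^2 = 1/4" by (simp add: power2_eq_square)
      ultimately show ?thesis by (simp only: h4)
    qed
    show ?thesis unfolding F_def hh by (simp only: mult_ac)
  qed
  ultimately show ?thesis by simp
qed

lemma zeta_bound: "2 \<le> Re w \<Longrightarrow> norm (riemann_zeta w) \<le> 1 + Cz"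
proof -
  assume w: "2 \<le> Re w"
  have "riemann_zeta w = zD w" using w by (intro rz_props) auto
  hence "norm (riemann_zeta w) \<le> norm (1::complex) + norm (zD w - 1)"
    using norm_triangle_ineq[of 1 "zD w - 1"] by simp
  also have "norm (zD w - 1) \<le> Cz * 2 powr (- Re w)" by (rule zD_bound[OF w])
  also have "\<dots> \<le> Cz * 1"
  proof (intro mult_left_mono Cz_nonneg)
    have "(2::real) powr (- Re w) \<le> 2 powr 0" by (rule powr_mono) (use w in auto)
    thus "(2::real) powr (- Re w) \<le> 1" by simp
  qed
  finally show ?thesis by simp
qed

lemma fin_alg: "(G::complex) \<noteq> 0 \<Longrightarrow> E \<noteq> 0 \<Longrightarrow> z = 1 / (G * E) * (G * (E * z))"
proof -
  assume "G \<noteq> 0" "E \<noteq> 0"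
  hence a0: "G * E \<noteq> 0" by simp
  have "1 / (G * E) * (G * (E * z)) = (1 / (G * E) * (G * E)) * z" by (simp only: mult.assoc)
  also have "1 / (G * E) * (G * E) = 1" using a0 by simp
  finally show ?thesis by simp
qed

definition qz :: "nat \<Rightarrow> complex \<Rightarrow> complex" where
  "qz k s = (1/4)^(Suc k) * riemann_zeta (s + 2 * of_nat (Suc k)) * (pochhammer s (2*k+3) / fact (2*k+3))"

definition UU :: "complex set" where "UU = UNIV - of_int ` {..1}"

lemma open_UU: "open UU" unfolding UU_def by (intro open_Diff closed_of_int_image) auto

lemma conn_UU: "connected UU"
  unfolding UU_def by (rule connected_open_diff_countable) (auto intro: countable_image)

lemma shift_notin: "s \<in> UU \<Longrightarrow> s + 2 * of_nat (Suc k) \<noteq> 1"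
proof
  assume s: "s \<in> UU" and e: "s + 2 * of_nat (Suc k) = 1"
  hence "s = 1 - 2 * of_nat (Suc k)" by (metis add_diff_cancel_right')
  hence "s = of_int (- 2 * int k - 1)" by simp
  moreover have "- 2 * int k - 1 \<in> {..1}" by simp
  ultimately show False using s unfolding UU_def by blast
qed

lemma qz_bound:
  assumes "2 \<le> Re s + 2 * real (Suc k)" "norm s \<le> R"
  shows "norm (qz k s) \<le> (1 + Cz) * ((1/4)^(Suc k) * (pochhammer R (2*k+3) / fact (2*k+3)))"
proof -
  have z: "norm (riemann_zeta (s + 2 * of_nat (Suc k))) \<le> 1 + Cz" by (rule zeta_bound) (use assms in simp)
  have p: "norm (pochhammer s (2*k+3) / fact (2*k+3)) \<le> pochhammer R (2*k+3) / fact (2*k+3)"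
  proof -
    have "norm (pochhammer s (2*k+3)) \<le> pochhammer (norm s) (2*k+3)" by (rule norm_poch_le)
    also have "\<dots> \<le> pochhammer R (2*k+3)" by (rule poch_mono) (use assms in auto)
    finally show ?thesis by (simp add: norm_divide divide_right_mono)
  qed
  have n4: "norm ((1/4::complex)^(Suc k)) = (1/4)^(Suc k)" by (simp add: norm_power norm_divide)
  have "norm (qz k s) = (1/4)^(Suc k) * norm (riemann_zeta (s + 2 * of_nat (Suc k))) * norm (pochhammer s (2*k+3) / fact (2*k+3))"
    unfolding qz_def norm_mult n4 ..
  also have "\<dots> \<le> (1/4)^(Suc k) * (1 + Cz) * (pochhammer R (2*k+3) / fact (2*k+3))"
    using Cz_nonneg by (intro mult_mono mult_left_mono z p) auto
  finally show ?thesis by (simp add: mult_ac)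
qed

lemma qz_summable_holo:
  shows "(\<lambda>s. \<Sum>k. qz k s) holomorphic_on UU" "\<And>s. s \<in> UU \<Longrightarrow> summable (\<lambda>k. qz k s)"
proof -
  have th: "qz k holomorphic_on UU" for k
  proof -
    have "(riemann_zeta \<circ> (\<lambda>s. s + 2 * of_nat (Suc k))) holomorphic_on UU"
      by (rule holomorphic_on_compose_gen[OF _ rz_props(1)]) (auto intro!: holomorphic_intros dest: shift_notin)
    hence "(\<lambda>s. riemann_zeta (s + 2 * of_nat (Suc k))) holomorphic_on UU" by (simp add: o_def)
    thus ?thesis unfolding qz_def[abs_def] by (intro holomorphic_intros) auto
  qed
  have loc: "\<exists>d>0. cball z d \<subseteq> UU \<and> summable (\<lambda>k. qz k z) \<and>
     uniform_limit (cball z d) (\<lambda>N s. \<Sum>k<N. qz k s) (\<lambda>s. \<Sum>k. qz k s) sequentially" if z: "z \<in> UU" for z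
  proof -
    obtain d where d: "d > 0" "cball z d \<subseteq> UU" using open_contains_cball open_UU z by blast
    define R where "R = norm z + d"
    define r where "r = Re z - d"
    define N where "N = nat \<lceil>2 - r\<rceil>"
    define M where "M k = (1 + Cz) * ((1/4)^(Suc k) * (pochhammer R (2*k+3) / fact (2*k+3)))" for k
    have R0: "0 \<le> R" using d by (simp add: R_def)
    have sM: "summable M" unfolding M_def by (intro summable_mult sum_v R0)
    have ev: "\<forall>\<^sub>F k in sequentially. \<forall>s\<in>cball z d. norm (qz k s) \<le> M k"
      unfolding eventually_sequentially
    proof (intro exI allI impI ballI)
      fix k s assume k: "N \<le> k" and s: "s \<in> cball z d"
      from cball_Re[OF s] have rs: "r \<le> Re s" and ns: "norm s \<le> R" by (auto simp: r_def R_def)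
      have "2 - r \<le> real N" unfolding N_def by linarith
      hence "2 \<le> Re s + 2 * real (Suc k)" using k rs by simp
      from qz_bound[OF this ns] show "norm (qz k s) \<le> M k" unfolding M_def .
    qed
    have "summable (\<lambda>k. qz k z)"
    proof (rule summable_comparison_test_ev[OF _ sM])
      show "\<forall>\<^sub>F k in sequentially. norm (qz k z) \<le> M k"
        using ev by eventually_elim (use d in auto)
    qed
    moreover have "uniform_limit (cball z d) (\<lambda>N s. \<Sum>k<N. qz k s) (\<lambda>s. \<Sum>k. qz k s) sequentially"
      by (rule Weierstrass_m_test_ev[OF ev sM])
    ultimately show ?thesis using d by blast
  qed
  show "(\<lambda>s. \<Sum>k. qz k s) holomorphic_on UU"
  proof (rule holomorphic_uniform_sequence[OF open_UU, where f = "\<lambda>N s. \<Sum>k<N. qz k s"])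
    show "(\<lambda>s. \<Sum>k<N. qz k s) holomorphic_on UU" for N by (intro holomorphic_intros th)
    fix z assume "z \<in> UU"
    from loc[OF this] show "\<exists>d>0. cball z d \<subseteq> UU \<and> uniform_limit (cball z d) (\<lambda>N s. \<Sum>k<N. qz k s) (\<lambda>s. \<Sum>k. qz k s) sequentially"
      by blast
  qed
  fix s assume "s \<in> UU"
  from loc[OF this] show "summable (\<lambda>k. qz k s)" by blast
qed

lemma big_identity:
  assumes s: "s \<in> UU"
  shows "(2 powr s - 1 - s) * riemann_zeta s = (\<Sum>k. qz k s)"
proof (rule analytic_continuation_open[of "{s. 2 < Re s}" UU "\<lambda>s. (2 powr s - 1 - s) * riemann_zeta s" "\<lambda>s. \<Sum>k. qz k s" s])
  show "open {s::complex. 2 < Re s}" by (rule open_halfspace_Re_gt)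
  show "open UU" by (rule open_UU)
  show "{s::complex. 2 < Re s} \<noteq> {}" by (intro ex_in_conv[THEN iffD1] exI[of _ 3]) simp
  show "connected UU" by (rule conn_UU)
  show "{s::complex. 2 < Re s} \<subseteq> UU" unfolding UU_def by auto
  have "1 \<notin> UU" unfolding UU_def by (auto intro: image_eqI[of 1 of_int 1])
  hence "UU \<subseteq> UNIV - {1}" by auto
  thus "(\<lambda>s. (2 powr s - 1 - s) * riemann_zeta s) holomorphic_on UU"
    by (intro holomorphic_intros holomorphic_on_subset[OF rz_props(1)]) auto
  show "(\<lambda>s. \<Sum>k. qz k s) holomorphic_on UU" by (rule qz_summable_holo(1))
  show "s \<in> UU" by fact
  fix z :: complex assume z: "z \<in> {s. 2 < Re s}"
  have z1: "1 < Re z" using z by simp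
  have "qz k z = (1/4)^(Suc k) * zD (z + 2 * of_nat (Suc k)) * (pochhammer z (2*k+3) / fact (2*k+3))" for k
    unfolding qz_def using z1 by (subst rz_props(2)) auto
  hence "(\<lambda>k. qz k z) sums ((2 powr z - 1 - z) * zD z)" using main_id[OF z1] by simp
  moreover have "riemann_zeta z = zD z" using z1 by (rule rz_props(2))
  ultimately show "(2 powr z - 1 - z) * riemann_zeta z = (\<Sum>k. qz k z)" by (simp add: sums_iff)
qed

theorem mainTheorem14:
  fixes s :: complex
  assumes "s \<noteq> 1"
    and "s \<notin> \<int>\<^sub>\<le>\<^sub>0"
    and "(2::complex) powr s - 1 - s \<noteq> 0"
    and "\<And>k::nat. k \<ge> 1 \<Longrightarrow> s + 2 * of_nat k \<noteq> 1 \<and> 1 + s + 2 * of_nat k \<notin> \<int>\<^sub>\<le>\<^sub>0"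
  shows "summable (\<lambda>k. (2::complex) powr (- 2 * of_nat (Suc k)) * riemann_zeta (s + 2 * of_nat (Suc k))
              * Gamma (1 + s + 2 * of_nat (Suc k)) / Gamma (2 * of_nat (Suc k) + 2))
         \<and> riemann_zeta s = 1 / (Gamma s * ((2::complex) powr s - 1 - s)) *
             (\<Sum>k. (2::complex) powr (- 2 * of_nat (Suc k)) * riemann_zeta (s + 2 * of_nat (Suc k))
              * Gamma (1 + s + 2 * of_nat (Suc k)) / Gamma (2 * of_nat (Suc k) + 2))"
proof -
  have sU: "s \<in> UU"
  proof -
    have "s \<noteq> of_int j" if "j \<le> 1" for j
    proof (cases "j = 1")
      case True thus ?thesis using assms(1) by simp
    next
      case False
      hence "j \<le> 0" using that by simp
      hence "(of_int j :: complex) \<in> \<int>\<^sub>\<le>\<^sub>0" by (rule nonpos_Ints_of_int)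
      thus ?thesis using assms(2) by auto
    qed
    thus ?thesis unfolding UU_def by auto
  qed
  have G0: "Gamma s \<noteq> 0" using assms(2) by (simp add: Gamma_eq_zero_iff)
  have teq: "(2::complex) powr (- 2 * of_nat (Suc k)) * riemann_zeta (s + 2 * of_nat (Suc k))
              * Gamma (1 + s + 2 * of_nat (Suc k)) / Gamma (2 * of_nat (Suc k) + 2) = Gamma s * qz k s" for k
  proof -
    have p4: "(2::complex) powr (- 2 * of_nat (Suc k)) = (1/4)^(Suc k)"
    proof -
      have "(- 2 * of_nat (Suc k) :: complex) = - of_nat (2 * Suc k)" by simp
      hence "(2::complex) powr (- 2 * of_nat (Suc k)) = inverse (2 powr of_nat (2 * Suc k))"
        by (simp only: powr_minus)
      also have "(2::complex) powr of_nat (2 * Suc k) = 2 ^ (2 * Suc k)" by (rule powr_nat') simp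
      also have "(2::complex) ^ (2 * Suc k) = 4 ^ Suc k" by (simp only: power_mult) simp
      finally show ?thesis by (simp add: power_one_over inverse_eq_divide)
    qed
    have g1: "Gamma (1 + s + 2 * of_nat (Suc k)) = pochhammer s (2*k+3) * Gamma s"
    proof -
      have "1 + s + 2 * of_nat (Suc k) = s + of_nat (2*k+3)" by simp
      thus ?thesis using pochhammer_Gamma[OF assms(2), of "2*k+3"] G0 by (simp add: field_simps)
    qed
    have g2: "Gamma (2 * of_nat (Suc k) + 2 :: complex) = fact (2*k+3)"
    proof -
      have "(2 * of_nat (Suc k) + 2 :: complex) = 1 + of_nat (2*k+3)" by simp
      thus ?thesis using Gamma_fact[of "2*k+3"] by simp
    qed
    show ?thesis unfolding p4 g1 g2 qz_def by (simp add: field_simps)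
  qed
  have sq: "summable (\<lambda>k. qz k s)" by (rule qz_summable_holo(2)[OF sU])
  have E: "(2 powr s - 1 - s) * riemann_zeta s = (\<Sum>k. qz k s)" by (rule big_identity[OF sU])
  show ?thesis
  proof
    show "summable (\<lambda>k. (2::complex) powr (- 2 * of_nat (Suc k)) * riemann_zeta (s + 2 * of_nat (Suc k))
              * Gamma (1 + s + 2 * of_nat (Suc k)) / Gamma (2 * of_nat (Suc k) + 2))"
      unfolding teq by (rule summable_mult[OF sq])
    have "(\<Sum>k. (2::complex) powr (- 2 * of_nat (Suc k)) * riemann_zeta (s + 2 * of_nat (Suc k))
              * Gamma (1 + s + 2 * of_nat (Suc k)) / Gamma (2 * of_nat (Suc k) + 2)) = Gamma s * (\<Sum>k. qz k s)"
      unfolding teq by (rule suminf_mult[OF sq])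
    also have "\<dots> = Gamma s * ((2 powr s - 1 - s) * riemann_zeta s)" by (simp only: E)
    finally have hS: "(\<Sum>k. (2::complex) powr (- 2 * of_nat (Suc k)) * riemann_zeta (s + 2 * of_nat (Suc k))
              * Gamma (1 + s + 2 * of_nat (Suc k)) / Gamma (2 * of_nat (Suc k) + 2)) = Gamma s * ((2 powr s - 1 - s) * riemann_zeta s)" .
    have fin: "riemann_zeta s = 1 / (Gamma s * ((2::complex) powr s - 1 - s)) * (Gamma s * ((2 powr s - 1 - s) * riemann_zeta s))"
      by (rule fin_alg[OF G0 assms(3)])
    show "riemann_zeta s = 1 / (Gamma s * ((2::complex) powr s - 1 - s)) *
             (\<Sum>k. (2::complex) powr (- 2 * of_nat (Suc k)) * riemann_zeta (s + 2 * of_nat (Suc k))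
              * Gamma (1 + s + 2 * of_nat (Suc k)) / Gamma (2 * of_nat (Suc k) + 2))"
      unfolding hS by (rule fin)
  qed
qed


end
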